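(* Let $\alpha,\beta$ be sets, $z\in\beta$, $\mathit{seq}:\beta\times\alpha\to\beta$ and $\mathit{comb}:\beta\times\beta\to\beta$, and write $x\oplus y$ for $\mathit{comb}(x,y)$. Let $\Gamma=\{\mathrm{foldl}(\mathit{seq},z,L) : L \text{ a finite list over }\alpha\}$. Then calls $\mathrm{aggregate}(z,\mathit{seq},\mathit{comb},\mathit{rdd})$ have deterministic outcomes if and only if both of the following hold: (1) $(\Gamma,\oplus,z)$ is a commutative monoid, i.e. $\oplus$ maps $\Gamma\times\Gamma$ into $\Gamma$, is associative and commutative on $\Gamma$, and $z$ is an identity for $\oplus$ on $\Gamma$; (2) for all finite lists $p_1,p_2$ over $\alpha$, $\mathrm{foldl}(\mathit{seq},z,p_1 \mathbin{+\!\!+} p_2)=\mathrm{foldl}(\mathit{seq},z,p_1)\oplus\mathrm{foldl}(\mathit{seq},z,p_2)$.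
   Context: Lists are finite; $\mathbin{+\!\!+}$ is list concatenation and $\mathrm{concat}$ concatenates a list of lists. For $f:B\times A\to B$, $b\in B$: $\mathrm{foldl}(f,b,[\,])=b$ and $\mathrm{foldl}(f,b,[x_1,\dots,x_n])=f(\cdots f(f(b,x_1),x_2)\cdots,x_n)$. An RDD over $\alpha$ is a list of lists over $\alpha$ (its "partitions"). A partitioning is a function $P$ sending each list $L$ over $\alpha$ to an RDD obtained by splitting $L$ into consecutive (possibly empty) pieces $p_1,\dots,p_n$ with $p_1\mathbin{+\!\!+}\cdots\mathbin{+\!\!+}p_n=L$ and then arbitrarily permuting the list $[p_1,\dots,p_n]$. Define $\mathrm{aggregate}_{\mathrm{det}}(z,\mathit{seq},\mathit{comb},\mathit{rdd})=\mathrm{foldl}(\mathit{comb},z,[\mathrm{foldl}(\mathit{seq},z,q_1),\dots,\mathrm{foldl}(\mathit{seq},z,q_m)])$ for $\mathit{rdd}=[q_1,\dots,q_m]$. Calls $\mathrm{aggregate}(z,\mathit{seq},\mathit{comb},\mathit{rdd})$ are said to have deterministic outcomes if $\mathrm{aggregate}_{\mathrm{det}}(z,\mathit{seq},\mathit{comb},P(L))=\mathrm{foldl}(\mathit{seq},z,L)$ for all lists $L$ over $\alpha$ and all partitionings $P$. *)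

theory Defs
  imports Main "HOL-Library.Multiset"
begin

text \<open>An RDD is a list of partitions. A partitioning sends each list L to a
permutation of some splitting of L into consecutive (possibly empty) pieces.\<close>

definition is_partitioning :: "('a list \<Rightarrow> 'a list list) \<Rightarrow> bool" where
  "is_partitioning P \<longleftrightarrow>
     (\<forall>L. \<exists>ps. concat ps = L \<and> mset (P L) = mset ps)"

definition aggregate_det ::
  "'b \<Rightarrow> ('b \<Rightarrow> 'a \<Rightarrow> 'b) \<Rightarrow> ('b \<Rightarrow> 'b \<Rightarrow> 'b) \<Rightarrow> 'a list list \<Rightarrow> 'b" where
  "aggregate_det z seq comb rdd = foldl comb z (map (foldl seq z) rdd)"

definition deterministic_aggregate ::
  "'b \<Rightarrow> ('b \<Rightarrow> 'a \<Rightarrow> 'b) \<Rightarrow> ('b \<Rightarrow> 'b \<Rightarrow> 'b) \<Rightarrow> bool" where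
  "deterministic_aggregate z seq comb \<longleftrightarrow>
     (\<forall>P. is_partitioning P \<longrightarrow>
        (\<forall>L. aggregate_det z seq comb (P L) = foldl seq z L))"

definition comm_monoid_on :: "'b set \<Rightarrow> ('b \<Rightarrow> 'b \<Rightarrow> 'b) \<Rightarrow> 'b \<Rightarrow> bool" where
  "comm_monoid_on G f e \<longleftrightarrow>
     (\<forall>x\<in>G. \<forall>y\<in>G. f x y \<in> G) \<and>
     (\<forall>x\<in>G. \<forall>y\<in>G. \<forall>w\<in>G. f (f x y) w = f x (f y w)) \<and>
     (\<forall>x\<in>G. \<forall>y\<in>G. f x y = f y x) \<and>
     (\<forall>x\<in>G. f e x = x \<and> f x e = x)"

end

theory Submission
  imports Defs
begin

declare foldl_append[simp del]

lemma fold_concat: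
  assumes H: "\<forall>p1 p2. foldl seq z (p1 @ p2) = comb (foldl seq z p1) (foldl seq z p2)"
  shows "foldl comb (foldl seq z a) (map (foldl seq z) ps) = foldl seq z (a @ concat ps)"
proof (induction ps arbitrary: a)
  case Nil then show ?case by simp
next
  case (Cons p ps)
  have "comb (foldl seq z a) (foldl seq z p) = foldl seq z (a @ p)" using H by simp
  then show ?case using Cons.IH[of "a @ p"] by simp
qed

lemma perm_concat:
  assumes H: "\<forall>p1 p2. foldl seq z (p1 @ p2) = comb (foldl seq z p1) (foldl seq z p2)"
    and C: "comm_monoid_on {foldl seq z L | L. True} comb z"
  shows "mset xs = mset ys \<Longrightarrow> foldl seq z (concat xs) = foldl seq z (concat ys)"
proof (induction xs arbitrary: ys)
  case Nil then show ?case by simp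
next
  case (Cons x xs)
  let ?f = "foldl seq z"
  have "x \<in> set ys" using Cons.prems by (metis list.set_intros(1) set_mset_mset)
  then obtain ys1 ys2 where ys: "ys = ys1 @ x # ys2" by (meson split_list)
  have m: "mset xs = mset (ys1 @ ys2)" using Cons.prems ys by simp
  have cm: "\<And>a b. comb (?f a) (?f b) = comb (?f b) (?f a)" using C unfolding comm_monoid_on_def by blast
  define A where "A = concat ys1"
  define B where "B = concat ys2"
  have e1: "?f (A @ (x @ B)) = comb (?f A) (?f (x @ B))" using H by blast
  have e2: "?f (x @ B) = comb (?f x) (?f B)" using H by blast
  have e3: "?f ((A @ x) @ B) = comb (?f (A @ x)) (?f B)" using H by blast
  have e4: "?f (A @ x) = comb (?f A) (?f x)" using H by blast
  have e5: "?f (x @ A) = comb (?f x) (?f A)" using H by blast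
  have e6: "?f ((x @ A) @ B) = comb (?f (x @ A)) (?f B)" using H by blast
  have e7: "?f (x @ (A @ B)) = comb (?f x) (?f (A @ B))" using H by blast
  have c: "comb (?f A) (?f x) = comb (?f x) (?f A)" using cm by blast
  have "?f (concat ys) = ?f (A @ (x @ B))" using ys A_def B_def by simp
  also have "\<dots> = ?f ((A @ x) @ B)" by (simp only: append.assoc)
  also have "\<dots> = comb (?f (x @ A)) (?f B)" using e3 e4 e5 c by metis
  also have "\<dots> = ?f (x @ (A @ B))" using e6 by (metis append.assoc)
  also have "\<dots> = comb (?f x) (?f (concat (ys1 @ ys2)))" using e7 A_def B_def by simp
  also have "\<dots> = comb (?f x) (?f (concat xs))" using Cons.IH[OF m] by simp
  also have "\<dots> = ?f (concat (x # xs))" using H[rule_format, of x "concat xs"] by simp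
  finally show ?case by simp
qed

theorem lemma1:
  fixes z :: 'b and seq :: "'b \<Rightarrow> 'a \<Rightarrow> 'b" and comb :: "'b \<Rightarrow> 'b \<Rightarrow> 'b"
  shows "deterministic_aggregate z seq comb \<longleftrightarrow>
           (comm_monoid_on {foldl seq z L | L. True} comb z \<and>
            (\<forall>p1 p2. foldl seq z (p1 @ p2) = comb (foldl seq z p1) (foldl seq z p2)))"
proof
  let ?f = "foldl seq z"
  assume D: "deterministic_aggregate z seq comb"
  have use: "?f L = foldl comb z (map ?f (P L))" if "is_partitioning P" for P L
    using D that unfolding deterministic_aggregate_def aggregate_det_def by metis
  have left: "comb z (?f L) = ?f L" for L
  proof -
    have "is_partitioning (\<lambda>L. [L])" unfolding is_partitioning_def
      by (metis concat.simps(1) concat.simps(2) append_Nil2)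
    from use[OF this, of L] show ?thesis by simp
  qed
  have right: "comb (?f L) z = ?f L" for L
  proof -
    have "is_partitioning (\<lambda>L. [L, []])" unfolding is_partitioning_def
      by (intro allI exI[of _ "[_, []]"]) simp
    from use[OF this, of L] show ?thesis using left by simp
  qed
  have split: "?f (p1 @ p2) = comb (?f p1) (?f p2)" for p1 p2
  proof -
    have "is_partitioning (\<lambda>L. if L = p1 @ p2 then [p1, p2] else [L])" unfolding is_partitioning_def
    proof
      fix L show "\<exists>ps. concat ps = L \<and> mset (if L = p1 @ p2 then [p1, p2] else [L]) = mset ps"
        by (cases "L = p1 @ p2") (rule exI[of _ "[p1,p2]"], simp, rule exI[of _ "[L]"], simp)
    qed
    from use[OF this, of "p1 @ p2"] show ?thesis using left by simp
  qed
  have swap: "?f (p1 @ p2) = comb (?f p2) (?f p1)" for p1 p2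
  proof -
    have "is_partitioning (\<lambda>L. if L = p1 @ p2 then [p2, p1] else [L])" unfolding is_partitioning_def
    proof
      fix L show "\<exists>ps. concat ps = L \<and> mset (if L = p1 @ p2 then [p2, p1] else [L]) = mset ps"
        by (cases "L = p1 @ p2") (rule exI[of _ "[p1,p2]"], simp add: add_mset_commute, rule exI[of _ "[L]"], simp)
    qed
    from use[OF this, of "p1 @ p2"] show ?thesis using left by simp
  qed
  have "comm_monoid_on {?f L | L. True} comb z"
    unfolding comm_monoid_on_def
  proof (intro conjI ballI)
    fix x y assume "x \<in> {?f L | L. True}" "y \<in> {?f L | L. True}"
    then obtain a b where xy: "x = ?f a" "y = ?f b" by blast
    have "comb x y = ?f (a @ b)" using split[of a b] xy by simp
    then show "comb x y \<in> {?f L | L. True}" by blast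
    show "comb x y = comb y x" using split[of a b] swap[of a b] xy by simp
    fix w assume "w \<in> {?f L | L. True}"
    then obtain c where w: "w = ?f c" by blast
    have "comb (comb x y) w = ?f ((a @ b) @ c)" using xy w split[of a b] split[of "a @ b" c] by simp
    also have "\<dots> = ?f (a @ (b @ c))" by simp
    also have "\<dots> = comb x (comb y w)" using xy w split[of b c] split[of a "b @ c"] by simp
    finally show "comb (comb x y) w = comb x (comb y w)" .
  next
    fix x assume "x \<in> {?f L | L. True}"
    then obtain a where "x = ?f a" by blast
    then show "comb z x = x" "comb x z = x" using left right by simp_all
  qed
  then show "comm_monoid_on {?f L | L. True} comb z \<and>
            (\<forall>p1 p2. ?f (p1 @ p2) = comb (?f p1) (?f p2))" using split by blast
next
  let ?f = "foldl seq z"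
  assume A: "comm_monoid_on {?f L | L. True} comb z \<and>
            (\<forall>p1 p2. ?f (p1 @ p2) = comb (?f p1) (?f p2))"
  show "deterministic_aggregate z seq comb"
    unfolding deterministic_aggregate_def aggregate_det_def
  proof (intro allI impI)
    fix P :: "'a list \<Rightarrow> 'a list list" and L
    assume "is_partitioning P"
    then obtain ps where ps: "concat ps = L" "mset (P L) = mset ps"
      unfolding is_partitioning_def by blast
    have "foldl comb z (map ?f (P L)) = foldl comb (?f []) (map ?f (P L))" by simp
    also have "\<dots> = ?f (concat (P L))" using fold_concat[of seq z comb "[]"] A by simp
    also have "\<dots> = ?f (concat ps)" using perm_concat[OF conjunct2[OF A] conjunct1[OF A] ps(2)] .
    finally show "foldl comb z (map ?f (P L)) = ?f L" using ps(1) by simp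
  qed
qed

end
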